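(* The GRL-GUM interaction protocol described in the context satisfies the Guaranteed Utility Property: there exist sequences of agent valuation functions $q^{*,1}_{1:T},\dots,q^{*,k}_{1:T}$ and constants $C^1,\dots,C^k\in\mathbb{R}$ such that (1) for each agent $i$ and every sequence of reports $\overline{q^{-i}_{1:T}}$ of the other agents, $\mathbb{E}[U^i(q^{*,i}_{1:T},\overline{q^{-i}_{1:T}})]\ge C^i$; and (2) $\sup_{\overline{q^{1:k}_{1:T}}}\sum_i\mathbb{E}[U^i(\overline{q^{1:k}_{1:T}})]=\sum_i C^i$, where expectations are over the randomness of the protocol run in $\phi$.
   Context: There are $k$ agents, horizon $T$, a multi-agent environment $\phi$ giving $\phi(\overline{or_t}\mid\overline{h_{t-1}}\,\overline{a_t})$, known to the principal (mechanism designer) and the agents. Joint histories are $\overline{h_t}=\overline{a_1}\,\overline{or_1}\cdots\overline{a_t}\,\overline{or_t}$, joint percepts $\overline{or_t}=(or_{t,1},\dots,or_{t,k})$ with agent $j$'s reward $r_t^j$. Partial histories: $\overline{h_t^{1:i}}=\overline{h_{t-1}}\,\overline{a_t}\,or_{t,1}\cdots or_{t,i}$, with $\overline{h_t^{1:0}}=\overline{h_{t-1}}\,\overline{a_t}$ and $\overline{h_0^{1:i}}=\epsilon$. For a profile $\widehat q^{1:k}$ of functions of joint actions, $f$ selects $\arg\max_{\overline a}\sum_j\widehat q^j(\overline{h_{t-1}},\overline a)$. The (true) q-functions are $q_t^i(\overline{h_{t-1}},\overline{a_t})=0$ for $t>T$ and otherwise $\sum_{\overline{or_t}}\phi(\overline{or_t}\mid\overline{h_{t-1}}\,\overline{a_t})[r_t^i+\overline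 q_{t+1}^i(\overline{h_{t-1}}\,\overline{a_t}\,\overline{or_t})]$, with $\overline q_t^i(\overline{h_{t-1}})=q_t^i(\overline{h_{t-1}},f(q_t^{1:k}(\overline{h_{t-1}},\cdot)))$. The principal's anticipated cumulative payoff for agent $j$ is $\Upsilon_t^j(\overline{h_{t-1}^{1:i}},\widehat q^{1:k})=\mathbb{E}_{or_{t-1,(i+1):k}\sim\phi}\big[\sum_{s=1}^{t-1}r_s^j+q_t^j(\overline{h_{t-1}},f(\widehat q^{1:k}(\overline{h_{t-1}},\cdot)))\big]$ (expectation over the remaining percept components given the partial history), $\Upsilon_{T+1}^j(\overline{h_T^{1:i}},\epsilon)=\mathbb{E}_{or_{T,(i+1):k}\sim\phi}[\sum_{s=1}^T r_s^j]$, and $\Upsilon_1^j(\epsilon,\widehat q_1^{1:k})=q_1^j(\epsilon,f(\widehat q_1^{1:k}(\epsilon,\cdot)))$. GRL-GUM protocol: at each time $t$, each agent $i$ submits a report $\widetilde q_t^i(\overline{h_{t-1}},\cdot)$; the joint action $\overline{a_t^*}=\arg\max_{\overline a}\sum_i\widetilde q_t^i(\overline{h_{t-1}},\overline a)$ is executed; $\overline{or_t}\sim\phi(\cdot\mid\overline{h_{t-1}}\,\overline{a_t^*})$ is sampled and each agent receives its percept; transfers are $\gamma_t^{i\to j}=\Upsilon_t^j(\overline{h_{t-1}^{1:i}},(\widetilde q_t^1,\dots,\widetilde q_t^i,q_t^{i+1},\dots,q_t^k))-\Upsilon_t^j(\overline{h_{t-1}^{1:(i-1)}},(\widetilde q_t^1,\dots,\widetilde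 q_t^{i-1},q_t^i,\dots,q_t^k))$ (paid by $i$ to $j$, with $q_t^l$ the true q-functions), and $p_t^i=\sum_{j\neq i}\gamma_t^{i\to j}-\sum_{j\neq i}\gamma_t^{j\to i}$. Agent $i$'s total utility is $U^i=\sum_{t=1}^T(r_t^i+p_t^i)$, a random variable depending on $\phi$ and the submitted report sequences $\overline{q^{1:k}_{1:T}}$. *)

theory Defs
  imports "HOL-Probability.Probability"
begin

text \<open>Joint histories: lists of (joint action, joint percept) pairs, where a joint
  percept is the list of the k individual percepts (agents are indexed 0..k-1,
  agent m corresponding to agent m+1 of the paper).\<close>

type_synonym ('a, 'p) hist = "('a \<times> 'p list) list"

locale grl_env =
  fixes T :: nat and k :: nat
    and \<phi> :: "('a, 'p) hist \<Rightarrow> 'a \<Rightarrow> 'p list pmf"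
    and rwd :: "'p \<Rightarrow> real"
    and f :: "('a \<Rightarrow> real) \<Rightarrow> 'a"
begin

primrec qv :: "nat \<Rightarrow> nat \<Rightarrow> ('a, 'p) hist \<Rightarrow> 'a \<Rightarrow> real" where
  "qv 0 i h a = 0"
| "qv (Suc n) i h a =
     measure_pmf.expectation (\<phi> h a)
       (\<lambda>x. rwd (x ! i) + qv n i (h @ [(a, x)])
              (f (\<lambda>b. \<Sum>l<k. qv n l (h @ [(a, x)]) b)))"

text \<open>q_t^i (h_{t-1}, a); zero for t > T.\<close>
definition qt :: "nat \<Rightarrow> nat \<Rightarrow> ('a, 'p) hist \<Rightarrow> 'a \<Rightarrow> real" where
  "qt t i h a = qv (Suc T - t) i h a"

definition cumrew :: "nat \<Rightarrow> ('a, 'p) hist \<Rightarrow> real" where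
  "cumrew j h = (\<Sum>x\<leftarrow>h. rwd (snd x ! j))"

text \<open>Upsilon_t^j for t >= 2: partial history h_{t-2} a_{t-1} pre, with pre the first
  (length pre) components of or_{t-1}; the expectation is over the conditional
  distribution of or_{t-1} given that prefix.\<close>
definition Ups :: "nat \<Rightarrow> nat \<Rightarrow> ('a, 'p) hist \<Rightarrow> 'a \<Rightarrow> 'p list
                   \<Rightarrow> (nat \<Rightarrow> ('a, 'p) hist \<Rightarrow> 'a \<Rightarrow> real) \<Rightarrow> real" where
  "Ups t j g a pre Q =
     measure_pmf.expectation (cond_pmf (\<phi> g a) {x. take (length pre) x = pre})
       (\<lambda>x. cumrew j (g @ [(a, x)]) +
            qt t j (g @ [(a, x)]) (f (\<lambda>b. \<Sum>l<k. Q l (g @ [(a, x)]) b)))"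

text \<open>Upsilon_t^j evaluated at the partial history h_{t-1}^{1:i} of a realised history h.\<close>
definition UpsAt :: "nat \<Rightarrow> nat \<Rightarrow> ('a, 'p) hist \<Rightarrow> nat
                     \<Rightarrow> (nat \<Rightarrow> ('a, 'p) hist \<Rightarrow> 'a \<Rightarrow> real) \<Rightarrow> real" where
  "UpsAt t j h i Q =
     (if t = 1 then qt 1 j [] (f (\<lambda>b. \<Sum>l<k. Q l [] b))
      else Ups t j (take (t - 2) h) (fst (h ! (t - 2))) (take i (snd (h ! (t - 2)))) Q)"

text \<open>Report sequences: rep m t is agent m's report at time t (a function of the
  joint history h_{t-1} and the joint action).\<close>
definition prof :: "(nat \<Rightarrow> nat \<Rightarrow> ('a, 'p) hist \<Rightarrow> 'a \<Rightarrow> real) \<Rightarrow> nat \<Rightarrow> nat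
                    \<Rightarrow> nat \<Rightarrow> ('a, 'p) hist \<Rightarrow> 'a \<Rightarrow> real" where
  "prof rep t n = (\<lambda>m. if m < n then rep m t else qt t m)"

text \<open>gamma_t^{l -> j} (paid by l to j).\<close>
definition gam :: "(nat \<Rightarrow> nat \<Rightarrow> ('a, 'p) hist \<Rightarrow> 'a \<Rightarrow> real) \<Rightarrow> nat \<Rightarrow> nat \<Rightarrow> nat
                   \<Rightarrow> ('a, 'p) hist \<Rightarrow> real" where
  "gam rep t l j h = UpsAt t j h (Suc l) (prof rep t (Suc l)) - UpsAt t j h l (prof rep t l)"

definition pay :: "(nat \<Rightarrow> nat \<Rightarrow> ('a, 'p) hist \<Rightarrow> 'a \<Rightarrow> real) \<Rightarrow> nat \<Rightarrow> nat
                   \<Rightarrow> ('a, 'p) hist \<Rightarrow> real" where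
  "pay rep t i h = (\<Sum>j\<in>{..<k} - {i}. gam rep t i j h) - (\<Sum>j\<in>{..<k} - {i}. gam rep t j i h)"

definition util :: "(nat \<Rightarrow> nat \<Rightarrow> ('a, 'p) hist \<Rightarrow> 'a \<Rightarrow> real) \<Rightarrow> nat
                    \<Rightarrow> ('a, 'p) hist \<Rightarrow> real" where
  "util rep i h = (\<Sum>t = 1..T. rwd (snd (h ! (t - 1)) ! i) + pay rep t i h)"

primrec run :: "(nat \<Rightarrow> nat \<Rightarrow> ('a, 'p) hist \<Rightarrow> 'a \<Rightarrow> real) \<Rightarrow> nat \<Rightarrow> ('a, 'p) hist pmf" where
  "run rep 0 = return_pmf []"
| "run rep (Suc n) =
     bind_pmf (run rep n)
       (\<lambda>h. let a = f (\<lambda>b. \<Sum>m<k. rep m (Suc n) h b)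
            in map_pmf (\<lambda>x. h @ [(a, x)]) (\<phi> h a))"

definition EU :: "(nat \<Rightarrow> nat \<Rightarrow> ('a, 'p) hist \<Rightarrow> 'a \<Rightarrow> real) \<Rightarrow> nat \<Rightarrow> real" where
  "EU rep i = measure_pmf.expectation (run rep T) (util rep i)"

end

end

theory Submission imports Defs begin

abbreviation Ex :: "'b pmf \<Rightarrow> ('b \<Rightarrow> real) \<Rightarrow> real" where
  "Ex p g \<equiv> measure_pmf.expectation p g"

lemma Ex_cong: "(\<And>x. x \<in> set_pmf p \<Longrightarrow> F x = G x) \<Longrightarrow> Ex p F = Ex p G"
  by (rule integral_cong_AE) (auto simp: AE_measure_pmf_iff)

lemma Ex_bind_fin:
  fixes F :: "'b \<Rightarrow> real"
  assumes fin: "finite (set_pmf (bind_pmf M N))"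
  shows "Ex (bind_pmf M N) F = Ex M (\<lambda>x. Ex (N x) F)"
proof -
  define S where "S = set_pmf (bind_pmf M N)"
  define G where "G x = (if x \<in> S then F x else 0)" for x
  define B where "B = (\<Sum>x\<in>S. \<bar>F x\<bar>)"
  have bnd: "\<bar>G x\<bar> \<le> B" for x
    using fin by (auto simp: G_def B_def S_def intro!: member_le_sum)
  have "Ex (bind_pmf M N) F = Ex (bind_pmf M N) G"
    by (rule Ex_cong) (simp add: G_def S_def)
  also have "\<dots> = Ex M (\<lambda>x. Ex (N x) G)"
    unfolding measure_pmf_bind
    by (rule integral_bind[where K="count_space UNIV" and B=B and B'=1])
       (auto simp: bnd measurable_measure_pmf measure_pmf.finite_measure_axioms measure_pmf_in_subprob_algebra
         measure_pmf.emeasure_space_1)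
  also have "\<dots> = Ex M (\<lambda>x. Ex (N x) F)"
    by (rule Ex_cong, rule Ex_cong) (auto simp: G_def S_def)
  finally show ?thesis .
qed

lemma tower:
  fixes F :: "'b \<Rightarrow> real"
  assumes "finite (set_pmf p)"
  shows "Ex p (\<lambda>x. Ex (cond_pmf p {y. \<pi> y = \<pi> x}) F) = Ex p F"
proof -
  have eq: "bind_pmf p (\<lambda>x. cond_pmf p {y. \<pi> y = \<pi> x}) = p"
  proof (rule bind_cond_pmf_cancel)
    fix x y assume "\<pi> y = \<pi> x"
    then have "{y'. \<pi> y' = \<pi> x} = {x'. \<pi> y = \<pi> x'}" by auto
    then show "measure_pmf.prob p {y'. \<pi> y' = \<pi> x} = measure_pmf.prob p {x'. \<pi> y = \<pi> x'}" by simp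
  qed auto
  have "Ex p F = Ex (bind_pmf p (\<lambda>x. cond_pmf p {y. \<pi> y = \<pi> x})) F" by (simp add: eq)
  also have "\<dots> = Ex p (\<lambda>x. Ex (cond_pmf p {y. \<pi> y = \<pi> x}) F)"
    by (rule Ex_bind_fin) (simp add: eq assms)
  finally show ?thesis by simp
qed

lemma sum_shift1: "(\<Sum>t=1..(n::nat). g (t - 1)) = (\<Sum>t<n. (g t :: real))"
  by (induction n) auto

lemma sum_tele1: "(\<Sum>t=1..(n::nat). g t - g (Suc t)) = g 1 - (g (Suc n) :: real)"
  by (induction n) auto

locale grl_ok = grl_env T k \<phi> rwd f
  for T k :: nat and \<phi> :: "('a, 'p) hist \<Rightarrow> 'a \<Rightarrow> 'p list pmf"
    and rwd :: "'p \<Rightarrow> real" and f :: "('a \<Rightarrow> real) \<Rightarrow> 'a" +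
  assumes len: "\<And>h a x. x \<in> set_pmf (\<phi> h a) \<Longrightarrow> length x = k"
    and fmax: "\<And>g b. g b \<le> g (f g)"
    and finp: "finite (UNIV :: 'p set)"
begin

definition act where "act rep t h = f (\<lambda>b. \<Sum>m<k. rep m t h b)"

lemma fin_phi: "finite (set_pmf (\<phi> h a))"
proof -
  have "set_pmf (\<phi> h a) \<subseteq> {xs. set xs \<subseteq> UNIV \<and> length xs = k}" using len by auto
  moreover have "finite {xs. set xs \<subseteq> (UNIV::'p set) \<and> length xs = k}"
    using finite_lists_length_eq[OF finp] by simp
  ultimately show ?thesis by (rule finite_subset)
qed

lemma run_Suc': "run rep (Suc n) = bind_pmf (run rep n)
   (\<lambda>h. map_pmf (\<lambda>x. h @ [(act rep (Suc n) h, x)]) (\<phi> h (act rep (Suc n) h)))"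
  by (simp add: act_def Let_def)

declare run.simps(2)[simp del]

lemma run_len: "h \<in> set_pmf (run rep n) \<Longrightarrow> length h = n"
  by (induction n arbitrary: h) (auto simp: run_Suc')

lemma fin_run: "finite (set_pmf (run rep n))"
  by (induction n) (auto simp: run_Suc' fin_phi)

lemma int_run: "integrable (measure_pmf (run rep n)) (g :: _ \<Rightarrow> real)"
  by (rule integrable_measure_pmf_finite[OF fin_run])

lemma int_phi: "integrable (measure_pmf (\<phi> h a)) (g :: _ \<Rightarrow> real)"
  by (rule integrable_measure_pmf_finite[OF fin_phi])

lemma take_run: "m \<le> n \<Longrightarrow> map_pmf (take m) (run rep n) = run rep m"
proof (induction n)
  case 0 then show ?case by simp
next
  case (Suc n)
  show ?case
  proof (cases "m = Suc n")
    case True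
    show ?thesis unfolding True by (intro map_pmf_idI) (auto dest: run_len)
  next
    case False
    then have mn: "m \<le> n" using Suc.prems by simp
    have "map_pmf (take m) (run rep (Suc n)) = bind_pmf (run rep n) (\<lambda>h. return_pmf (take m h))"
      unfolding run_Suc' map_bind_pmf
      by (rule bind_pmf_cong[OF refl]) (use mn in \<open>auto simp: map_pmf_comp dest!: run_len\<close>)
    also have "\<dots> = map_pmf (take m) (run rep n)" by (simp add: map_pmf_def)
    also have "\<dots> = run rep m" using Suc.IH mn by simp
    finally show ?thesis .
  qed
qed

lemma Ex_take: "m \<le> n \<Longrightarrow> Ex (run rep n) (\<lambda>h. G (take m h)) = Ex (run rep m) G"
proof -
  assume "m \<le> n"
  then have "Ex (run rep m) G = Ex (map_pmf (take m) (run rep n)) G" using take_run by simp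
  then show ?thesis by simp
qed

lemma Ex_run_Suc: "Ex (run rep (Suc n)) G =
   Ex (run rep n) (\<lambda>h. Ex (\<phi> h (act rep (Suc n) h)) (\<lambda>x. G (h @ [(act rep (Suc n) h, x)])))"
  unfolding run_Suc' by (simp add: Ex_bind_fin[OF fin_run[of rep "Suc n", unfolded run_Suc']])


lemma UpsAt_take: "1 \<le> t \<Longrightarrow> UpsAt t j h l Q = UpsAt t j (take (t - 1) h) l Q"
  by (auto simp: UpsAt_def min_def)

lemma Ex_UpsAt:
  assumes t: "1 \<le> t" "t \<le> T" and l: "l \<le> k"
  shows "Ex (run rep T) (\<lambda>h. UpsAt t j h l Q) =
         Ex (run rep (t - 1)) (\<lambda>h. cumrew j h + qt t j h (f (\<lambda>b. \<Sum>m<k. Q m h b)))"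
proof -
  have "(\<lambda>h. UpsAt t j h l Q) = (\<lambda>h. UpsAt t j (take (t - 1) h) l Q)"
    by (intro ext UpsAt_take t)
  then have "Ex (run rep T) (\<lambda>h. UpsAt t j h l Q) = Ex (run rep (t-1)) (\<lambda>h. UpsAt t j h l Q)"
    using Ex_take[of "t - 1" T rep "\<lambda>h. UpsAt t j h l Q"] t by simp
  also have "\<dots> = Ex (run rep (t - 1)) (\<lambda>h. cumrew j h + qt t j h (f (\<lambda>b. \<Sum>m<k. Q m h b)))"
  proof (cases "t = 1")
    case True
    then show ?thesis by (simp add: UpsAt_def cumrew_def)
  next
    case False
    then obtain s where s: "t = Suc (Suc s)" using t
      by (metis One_nat_def Suc_le_D le_SucE le_zero_eq not0_implies_Suc)
    define F where "F = (\<lambda>g a y. cumrew j (g @ [(a, y)]) + qt t j (g @ [(a, y)]) (f (\<lambda>b. \<Sum>m<k. Q m (g @ [(a, y)]) b)))"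
    have "Ex (run rep (t-1)) (\<lambda>h. UpsAt t j h l Q) =
      Ex (run rep s) (\<lambda>g. Ex (\<phi> g (act rep (Suc s) g)) (\<lambda>x. UpsAt t j (g @ [(act rep (Suc s) g, x)]) l Q))"
      by (simp add: s Ex_run_Suc)
    also have "\<dots> = Ex (run rep s) (\<lambda>g. Ex (\<phi> g (act rep (Suc s) g))
        (\<lambda>x. Ex (cond_pmf (\<phi> g (act rep (Suc s) g)) {y. take l y = take l x}) (F g (act rep (Suc s) g))))"
    proof (rule Ex_cong, rule Ex_cong)
      fix g x assume g: "g \<in> set_pmf (run rep s)" and x: "x \<in> set_pmf (\<phi> g (act rep (Suc s) g))"
      have lg: "length g = s" using run_len[OF g] .
      have lx: "length (take l x) = l" using len[OF x] l by simp
      show "UpsAt t j (g @ [(act rep (Suc s) g, x)]) l Q =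
         Ex (cond_pmf (\<phi> g (act rep (Suc s) g)) {y. take l y = take l x}) (F g (act rep (Suc s) g))"
        using len[OF x] l by (simp add: UpsAt_def Ups_def s lg nth_append F_def min_absorb2)
    qed
    also have "\<dots> = Ex (run rep s) (\<lambda>g. Ex (\<phi> g (act rep (Suc s) g)) (F g (act rep (Suc s) g)))"
      by (rule Ex_cong, rule tower[OF fin_phi])
    also have "\<dots> = Ex (run rep (t - 1)) (\<lambda>h. cumrew j h + qt t j h (f (\<lambda>b. \<Sum>m<k. Q m h b)))"
      by (simp add: s Ex_run_Suc F_def)
    finally show ?thesis .
  qed
  finally show ?thesis .
qed


lemma cumrew_snoc[simp]: "cumrew j (h @ [(a, x)]) = cumrew j h + rwd (x ! j)"
  by (simp add: cumrew_def)

lemma cumrew_nil[simp]: "cumrew j [] = 0"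
  by (simp add: cumrew_def)

lemma Ex_const_add: "Ex p (\<lambda>x. c + g x) = c + Ex p g" if "finite (set_pmf p)"
  using that by (simp add: Bochner_Integration.integral_add integrable_measure_pmf_finite)

lemma qt_step:
  assumes "1 \<le> t" "t \<le> T"
  shows "qt t i h a = Ex (\<phi> h a) (\<lambda>x. rwd (x ! i) + qt (Suc t) i (h @ [(a, x)])
            (f (\<lambda>b. \<Sum>m<k. qt (Suc t) m (h @ [(a, x)]) b)))"
proof -
  have e1: "Suc T - t = Suc (T - t)" and e2: "Suc T - Suc t = T - t" using assms by arith+
  show ?thesis by (simp add: qt_def e1 e2)
qed

lemma util_eq: "h \<in> set_pmf (run rep T) \<Longrightarrow> util rep i h = cumrew i h + (\<Sum>t=1..T. pay rep t i h)"
proof -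
  assume h: "h \<in> set_pmf (run rep T)"
  have lh: "length h = T" using run_len[OF h] .
  have "(\<Sum>t=1..T. rwd (snd (h ! (t - 1)) ! i)) = (\<Sum>t<T. rwd (snd (h ! t) ! i))"
    by (rule sum_shift1)
  also have "\<dots> = cumrew i h"
    unfolding cumrew_def sum_list_sum_nth using lh by (simp add: atLeast0LessThan)
  finally show ?thesis by (simp add: util_def sum.distrib)
qed

lemma EU_truth:
  assumes i: "i < k"
  shows "EU (rep(i := (\<lambda>t. qt t i))) i = qt 1 i [] (f (\<lambda>b. \<Sum>l<k. qt 1 l [] b))"
proof -
  define r where "r = rep(i := (\<lambda>t. qt t i))"
  define B where "B t = Ex (run r (t-1)) (\<lambda>h. cumrew i h + qt t i h (f (\<lambda>b. \<Sum>m<k. qt t m h b)))" for t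
  define A where "A t = Ex (run r (t-1)) (\<lambda>h. cumrew i h + qt t i h (act r t h))" for t
  have prof_eq: "prof r t (Suc i) = prof r t i" for t
    by (auto simp: prof_def r_def fun_eq_iff less_Suc_eq)
  have gam0: "Ex (run r T) (gam r t i j) = 0" if "1 \<le> t" "t \<le> T" for t j
  proof -
    have "Ex (run r T) (gam r t i j) = Ex (run r T) (\<lambda>h. UpsAt t j h (Suc i) (prof r t (Suc i)))
          - Ex (run r T) (\<lambda>h. UpsAt t j h i (prof r t i))"
      unfolding gam_def[abs_def] by (rule Bochner_Integration.integral_diff[OF int_run int_run])
    also have "\<dots> = 0" using that i by (simp add: Ex_UpsAt prof_eq)
    finally show ?thesis .
  qed
  have gamsum: "Ex (run r T) (\<lambda>h. \<Sum>j<k. gam r t j i h) = A t - B t" if t: "1 \<le> t" "t \<le> T" for t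
  proof -
    have tel: "(\<Sum>j<k. gam r t j i h) = UpsAt t i h k (prof r t k) - UpsAt t i h 0 (prof r t 0)" for h
      using sum_lessThan_telescope[of "\<lambda>l. UpsAt t i h l (prof r t l)" k] unfolding gam_def by simp
    have s1: "(\<lambda>b. \<Sum>m<k. prof r t k m h b) = (\<lambda>b. \<Sum>m<k. r m t h b)" for h
      by (auto simp: prof_def intro!: sum.cong)
    have s0: "prof r t 0 m = qt t m" for m by (simp add: prof_def)
    have "Ex (run r T) (\<lambda>h. \<Sum>j<k. gam r t j i h) =
      Ex (run r T) (\<lambda>h. UpsAt t i h k (prof r t k)) - Ex (run r T) (\<lambda>h. UpsAt t i h 0 (prof r t 0))"
      unfolding tel by (rule Bochner_Integration.integral_diff[OF int_run int_run])
    also have "\<dots> = A t - B t"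
      using t by (simp add: Ex_UpsAt s1 s0 A_def B_def act_def)
    finally show ?thesis .
  qed
  have AB: "A t = B (Suc t)" if t: "1 \<le> t" "t \<le> T" for t
  proof -
    obtain s where s: "t = Suc s" using t by (cases t) auto
    have "B (Suc t) = Ex (run r s) (\<lambda>h. Ex (\<phi> h (act r t h)) (\<lambda>x. cumrew i h + (rwd (x ! i) +
        qt (Suc t) i (h @ [(act r t h, x)]) (f (\<lambda>b. \<Sum>m<k. qt (Suc t) m (h @ [(act r t h, x)]) b)))))"
      by (simp add: B_def s Ex_run_Suc add.assoc)
    also have "\<dots> = A t"
      unfolding A_def s diff_Suc_1
      by (rule Ex_cong) (simp add: Ex_const_add fin_phi qt_step[OF t[unfolded s]])
    finally show ?thesis by simp
  qed
  have pay: "Ex (run r T) (pay r t i) = B t - A t" if t: "1 \<le> t" "t \<le> T" for t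
  proof -
    have pe: "pay r t i = (\<lambda>h. (\<Sum>j<k. gam r t i j h) - (\<Sum>j<k. gam r t j i h))"
      using i by (simp add: pay_def sum_diff1 fun_eq_iff)
    have "Ex (run r T) (pay r t i) = Ex (run r T) (\<lambda>h. \<Sum>j<k. gam r t i j h) - Ex (run r T) (\<lambda>h. \<Sum>j<k. gam r t j i h)"
      unfolding pe by (rule Bochner_Integration.integral_diff[OF int_run int_run])
    also have "Ex (run r T) (\<lambda>h. \<Sum>j<k. gam r t i j h) = (\<Sum>j<k. Ex (run r T) (gam r t i j))"
      by (simp add: int_run)
    also have "\<dots> = 0" using gam0[OF t] by simp
    finally show ?thesis using gamsum[OF t] by simp
  qed
  have "EU r i = Ex (run r T) (\<lambda>h. cumrew i h + (\<Sum>t=1..T. pay r t i h))"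
    unfolding EU_def by (rule Ex_cong) (rule util_eq)
  also have "\<dots> = Ex (run r T) (cumrew i) + (\<Sum>t=1..T. Ex (run r T) (pay r t i))"
    by (simp add: Bochner_Integration.integral_add int_run integral_sum)
  also have "(\<Sum>t=1..T. Ex (run r T) (pay r t i)) = (\<Sum>t=1..T. B t - B (Suc t))"
    by (rule sum.cong) (auto simp: pay AB)
  also have "\<dots> = B 1 - B (Suc T)" by (rule sum_tele1)
  also have "B (Suc T) = Ex (run r T) (cumrew i)" by (simp add: B_def qt_def)
  also have "B 1 = qt 1 i [] (f (\<lambda>b. \<Sum>l<k. qt 1 l [] b))" by (simp add: B_def)
  finally have "EU r i = qt 1 i [] (f (\<lambda>b. \<Sum>l<k. qt 1 l [] b))" by simp
  then show ?thesis by (simp only: r_def)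
qed


lemma payzero: "(\<Sum>i<k. pay rep t i h) = 0"
proof -
  have "(\<Sum>i<k. pay rep t i h) = (\<Sum>i<k. (\<Sum>j<k. gam rep t i j h) - (\<Sum>j<k. gam rep t j i h))"
    by (rule sum.cong) (auto simp: pay_def sum_diff1)
  also have "\<dots> = 0" by (simp add: sum_subtractf) (rule sum.swap)
  finally show ?thesis .
qed

definition Vn where "Vn n h = (\<Sum>l<k. qv n l h (f (\<lambda>b. \<Sum>l<k. qv n l h b)))"

lemma qsum_Suc: "(\<Sum>l<k. qv (Suc n) l h a) = Ex (\<phi> h a) (\<lambda>x. (\<Sum>l<k. rwd (x!l)) + Vn n (h @ [(a, x)]))"
  by (simp add: Vn_def int_phi sum.distrib Bochner_Integration.integral_add)

lemma bound: "m \<le> T \<Longrightarrow> Ex (run rep m) (\<lambda>h. (\<Sum>i<k. cumrew i h) + Vn (T - m) h) \<le> Vn T []"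
proof (induction m)
  case 0 show ?case by simp
next
  case (Suc m)
  have e: "T - m = Suc (T - Suc m)" using Suc.prems by arith
  have "Ex (run rep (Suc m)) (\<lambda>h. (\<Sum>i<k. cumrew i h) + Vn (T - Suc m) h) =
     Ex (run rep m) (\<lambda>g. (\<Sum>i<k. cumrew i g) + (\<Sum>l<k. qv (T - m) l g (act rep (Suc m) g)))"
    unfolding Ex_run_Suc
  proof (rule Ex_cong)
    fix g
    show "Ex (\<phi> g (act rep (Suc m) g)) (\<lambda>x. (\<Sum>i<k. cumrew i (g @ [(act rep (Suc m) g, x)])) +
        Vn (T - Suc m) (g @ [(act rep (Suc m) g, x)])) =
      (\<Sum>i<k. cumrew i g) + (\<Sum>l<k. qv (T - m) l g (act rep (Suc m) g))"
      unfolding e qsum_Suc by (simp add: sum.distrib add.assoc Ex_const_add fin_phi)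
  qed
  also have "\<dots> \<le> Ex (run rep m) (\<lambda>g. (\<Sum>i<k. cumrew i g) + Vn (T - m) g)"
  proof (rule integral_mono[OF int_run int_run])
    fix g
    show "(\<Sum>i<k. cumrew i g) + (\<Sum>l<k. qv (T - m) l g (act rep (Suc m) g)) \<le>
          (\<Sum>i<k. cumrew i g) + Vn (T - m) g"
      using fmax[of "\<lambda>b. \<Sum>l<k. qv (T - m) l g b" "act rep (Suc m) g"] by (simp add: Vn_def)
  qed
  also have "\<dots> \<le> Vn T []" using Suc by simp
  finally show ?case .
qed

lemma sumEU_le: "(\<Sum>i<k. EU rep i) \<le> Vn T []"
proof -
  have "(\<Sum>i<k. EU rep i) = Ex (run rep T) (\<lambda>h. \<Sum>i<k. util rep i h)"
    by (simp add: EU_def int_run)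
  also have "\<dots> = Ex (run rep T) (\<lambda>h. (\<Sum>i<k. cumrew i h) + Vn (T - T) h)"
  proof (rule Ex_cong)
    fix h assume h: "h \<in> set_pmf (run rep T)"
    have "(\<Sum>i<k. \<Sum>t=1..T. pay rep t i h) = (\<Sum>t=1..T. \<Sum>i<k. pay rep t i h)" by (rule sum.swap)
    also have "\<dots> = 0" by (simp add: payzero)
    finally show "(\<Sum>i<k. util rep i h) = (\<Sum>i<k. cumrew i h) + Vn (T - T) h"
      by (simp add: util_eq[OF h] sum.distrib Vn_def)
  qed
  also have "\<dots> \<le> Vn T []" by (rule bound) simp
  finally show ?thesis .
qed

lemma Vn_C: "Vn T [] = (\<Sum>i<k. qt 1 i [] (f (\<lambda>b. \<Sum>l<k. qt 1 l [] b)))"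
  by (simp add: Vn_def qt_def)

end

theorem theorem8:
  fixes T k :: nat
    and \<phi> :: "('a::finite, 'p::finite) hist \<Rightarrow> 'a \<Rightarrow> 'p list pmf"
    and rwd :: "'p \<Rightarrow> real"
    and f :: "('a \<Rightarrow> real) \<Rightarrow> 'a"
  assumes "\<forall>h a. \<forall>x \<in> set_pmf (\<phi> h a). length x = k"
    and "\<forall>g b. g b \<le> g (f g)"
  shows "\<exists>(qs :: nat \<Rightarrow> nat \<Rightarrow> ('a, 'p) hist \<Rightarrow> 'a \<Rightarrow> real) (C :: nat \<Rightarrow> real).
           (\<forall>i<k. \<forall>rep. grl_env.EU T k \<phi> rwd f (rep(i := qs i)) i \<ge> C i) \<and>
           (SUP rep. \<Sum>i<k. grl_env.EU T k \<phi> rwd f rep i) = (\<Sum>i<k. C i)"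
proof -
  interpret grl_ok T k \<phi> rwd f
    by unfold_locales (use assms in auto)
  define C where "C i = qt 1 i [] (f (\<lambda>b. \<Sum>l<k. qt 1 l [] b))" for i
  define rep0 :: "nat \<Rightarrow> nat \<Rightarrow> ('a, 'p) hist \<Rightarrow> 'a \<Rightarrow> real" where "rep0 = (\<lambda>m t. qt t m)"
  have c1: "\<forall>i<k. \<forall>rep. EU (rep(i := (\<lambda>t. qt t i))) i \<ge> C i"
    by (simp add: EU_truth C_def)
  have r0: "(\<Sum>i<k. EU rep0 i) = (\<Sum>i<k. C i)"
  proof (rule sum.cong[OF refl])
    fix i assume "i \<in> {..<k}"
    then have "EU (rep0(i := (\<lambda>t. qt t i))) i = C i" by (simp add: EU_truth C_def)
    moreover have "rep0(i := (\<lambda>t. qt t i)) = rep0" by (simp add: rep0_def fun_eq_iff)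
    ultimately show "EU rep0 i = C i" by simp
  qed
  have c2: "(SUP rep. \<Sum>i<k. EU rep i) = (\<Sum>i<k. C i)"
  proof (rule cSup_eq_maximum)
    show "(\<Sum>i<k. C i) \<in> range (\<lambda>rep. \<Sum>i<k. EU rep i)" using r0 by (metis rangeI)
  next
    fix x assume "x \<in> range (\<lambda>rep. \<Sum>i<k. EU rep i)"
    then show "x \<le> (\<Sum>i<k. C i)" using sumEU_le Vn_C by (auto simp: C_def)
  qed
  show ?thesis
    by (rule exI[of _ "\<lambda>i t. qt t i"], rule exI[of _ C]) (use c1 c2 in auto)
qed

end
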